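(* Let $k$ be a field and $n\geq1$. Let $U=\{g(t_1)\cdots g(t_n): g(x)\in k[x],\ g(0)\neq0\}\subseteq k[s_1(t),\dots,s_n(t)]$ and $H_n=U^{-1}k[s_1(t),\dots,s_n(t)]$. Let $\psi\colon H_n\to A$ be a homomorphism of $k$-algebras, put $u_i=\psi(s_i(t))$ for $i=1,\dots,n$ and $F_n^\psi(x)=x^n-u_1x^{n-1}+\cdots+(-1)^nu_n\in A[x]$. Then the $A$-module $A\otimes_k k[x]_{(x)}/(F_n^\psi(x))$ is free of rank $n$ with a basis consisting of the classes of $1,x,\dots,x^{n-1}$. In particular, with $F_n(x)=x^n-s_1(t)x^{n-1}+\cdots+(-1)^ns_n(t)\in H_n[x]$, the $H_n$-module $H_n\otimes_k k[x]_{(x)}/(F_n(x))$ is free of rank $n$ with a basis consisting of the classes of $1,x,\dots,x^{n-1}$.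
   Context: $s_i(t)$ is the $i$-th elementary symmetric polynomial in the variables $t_1,\dots,t_n$ of the polynomial ring $k[t_1,\dots,t_n]$. $k[x]_{(x)}$ is the localization of $k[x]$ at the multiplicative set of polynomials $g(x)$ with $g(0)\neq0$; $A[x]=A\otimes_k k[x]$. *)

theory Defs
  imports "HOL-Library.Poly_Mapping" "HOL-Computational_Algebra.Polynomial"
begin

(* Multivariate polynomials k[t_0, t_1, ...] as finitely supported maps
  from monomials (nat =>0 nat) to coefficients. The variables t_1..t_n of the
  paper are t_0..t_(n-1) here. *)

type_synonym 'k mpoly = "(nat \<Rightarrow>\<^sub>0 nat) \<Rightarrow>\<^sub>0 'k"

definition mconst :: "'k::comm_ring_1 \<Rightarrow> 'k mpoly" where
  "mconst c = Poly_Mapping.single 0 c"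

definition mvar :: "nat \<Rightarrow> 'k::comm_ring_1 mpoly" where
  "mvar i = Poly_Mapping.single (Poly_Mapping.single i 1) 1"

definition esym :: "nat \<Rightarrow> nat \<Rightarrow> 'k::comm_ring_1 mpoly" where
  "esym n i = (\<Sum>S\<in>{S. S \<subseteq> {0..<n} \<and> card S = i}. \<Prod>j\<in>S. mvar j)"

inductive_set sym_subalg :: "nat \<Rightarrow> 'k::comm_ring_1 mpoly set" for n where
  const: "mconst c \<in> sym_subalg n"
| gen: "1 \<le> i \<Longrightarrow> i \<le> n \<Longrightarrow> esym n i \<in> sym_subalg n"
| add: "f \<in> sym_subalg n \<Longrightarrow> g \<in> sym_subalg n \<Longrightarrow> f + g \<in> sym_subalg n"
| mult: "f \<in> sym_subalg n \<Longrightarrow> g \<in> sym_subalg n \<Longrightarrow> f * g \<in> sym_subalg n"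

definition eval_at_var :: "'k::comm_ring_1 poly \<Rightarrow> nat \<Rightarrow> 'k mpoly" where
  "eval_at_var g i = poly (map_poly mconst g) (mvar i)"

definition Uset :: "nat \<Rightarrow> 'k::field mpoly set" where
  "Uset n = {\<Prod>i<n. eval_at_var g i | g. poly g 0 \<noteq> 0}"

(* k-algebra structure on A given by a ring homomorphism phi : k \<Rightarrow> A. *)
definition ring_hom_on :: "('k::comm_ring_1 \<Rightarrow> 'b::comm_ring_1) \<Rightarrow> bool" where
  "ring_hom_on phi \<longleftrightarrow> phi 1 = 1 \<and> (\<forall>x y. phi (x + y) = phi x + phi y) \<and>
      (\<forall>x y. phi (x * y) = phi x * phi y)"

definition kalg_hom_sym :: "nat \<Rightarrow> ('k::field \<Rightarrow> 'b::comm_ring_1) \<Rightarrow> ('k mpoly \<Rightarrow> 'b) \<Rightarrow> bool" where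
  "kalg_hom_sym n phi psi \<longleftrightarrow>
     (\<forall>c. psi (mconst c) = phi c) \<and>
     (\<forall>f\<in>sym_subalg n. \<forall>g\<in>sym_subalg n. psi (f + g) = psi f + psi g \<and> psi (f * g) = psi f * psi g)"

(* Image in A[x] of the multiplicative set {g \<in> k[x] : g(0) \<noteq> 0}; the
  localisation of A[x] at it is A \<otimes>_k k[x]_(x). *)
definition SA :: "('k::field \<Rightarrow> 'b::comm_ring_1) \<Rightarrow> 'b poly set" where
  "SA phi = {map_poly phi g | g. poly g 0 \<noteq> 0}"

(* Equality of the fractions p/g and q/h in the quotient  S^(-1) A[x] / (F). *)
definition loc_quot_eq :: "'b::comm_ring_1 poly set \<Rightarrow> 'b poly \<Rightarrow> 'b poly \<times> 'b poly \<Rightarrow> 'b poly \<times> 'b poly \<Rightarrow> bool" where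
  "loc_quot_eq S F pg qh \<longleftrightarrow> (case (pg, qh) of ((p, g), (q, h)) \<Rightarrow>
     (\<exists>r w s. w \<in> S \<and> s \<in> S \<and> s * ((p * h - q * g) * w - F * r * g * h) = 0))"

definition Fpsi :: "nat \<Rightarrow> ('k::field mpoly \<Rightarrow> 'b::comm_ring_1) \<Rightarrow> 'b poly" where
  "Fpsi n psi = monom 1 n + (\<Sum>i=1..n. monom ((-1)^i * psi (esym n i)) (n - i))"

end

theory Submission
  imports Defs "Jordan_Normal_Form.Determinant"
begin

definition comp_mat :: "(nat \<Rightarrow> 'a::comm_ring_1) \<Rightarrow> nat \<Rightarrow> 'a mat" where
  "comp_mat c n = mat n n (\<lambda>(i,j). (if i = Suc j then 1 else 0) - (if j = n - 1 then c i else 0))"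

definition Fc :: "(nat \<Rightarrow> 'a::comm_ring_1) \<Rightarrow> nat \<Rightarrow> 'a poly" where
  "Fc c n = monom 1 n + (\<Sum>j<n. monom (c j) j)"

definition vp :: "'a::comm_ring_1 vec \<Rightarrow> 'a poly" where
  "vp v = (\<Sum>j<dim_vec v. monom (v$j) j)"

lemma coeff_vp: "coeff (vp v) k = (if k < dim_vec v then v$k else 0)"
  unfolding vp_def by (simp add: coeff_sum coeff_monom)

lemma coeff_Fc: "coeff (Fc c n) k = (if k = n then 1 else 0) + (if k < n then c k else 0)"
  unfolding Fc_def by (simp add: coeff_sum coeff_monom)

lemma comp_mat_carrier[simp]: "comp_mat c n \<in> carrier_mat n n"
  unfolding comp_mat_def by simp

lemma comp_mat_dims[simp]: "dim_row (comp_mat c n) = n" "dim_col (comp_mat c n) = n"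
  unfolding comp_mat_def by simp_all

lemma vp_comp:
  assumes v: "v \<in> carrier_vec n" and n: "n \<ge> 1"
  shows "vp (comp_mat c n *\<^sub>v v) = pCons 0 (vp v) - Polynomial.smult (v$(n-1)) (Fc c n)"
proof (rule poly_eqI)
  fix k
  show "coeff (vp (comp_mat c n *\<^sub>v v)) k = coeff (pCons 0 (vp v) - Polynomial.smult (v$(n-1)) (Fc c n)) k"
  proof (cases "k < n")
    case True
    have "(comp_mat c n *\<^sub>v v) $ k = (\<Sum>j<n. ((if k = Suc j then 1 else 0) - (if j = n - 1 then c k else 0)) * v$j)"
      using True v unfolding comp_mat_def by (simp add: scalar_prod_def lessThan_atLeast0)
    also have "\<dots> = (\<Sum>j<n. (if k = Suc j then v$j else 0)) - (\<Sum>j<n. if j = n - 1 then c k * v$j else 0)"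
      by (subst sum_subtractf[symmetric]) (rule sum.cong, auto simp: algebra_simps)
    also have "\<dots> = (if k = 0 then 0 else v$(k-1)) - c k * v$(n-1)"
    proof -
      have "(\<Sum>j<n. (if k = Suc j then v$j else 0)) = (if k = 0 then 0 else v$(k-1))"
        using True by (cases k) (auto simp: sum.delta)
      moreover have "(\<Sum>j<n. if j = n - 1 then c k * v$j else 0) = c k * v$(n-1)"
        using n by (simp add: sum.delta')
      ultimately show ?thesis by simp
    qed
    finally show ?thesis using True v n
      by (cases k) (auto simp: coeff_vp coeff_Fc coeff_pCons mult.commute)
  next
    case False
    then show ?thesis using v n
      by (cases k) (auto simp: coeff_vp coeff_Fc coeff_pCons, subgoal_tac "n - Suc 0 = nat", auto)
  qed
qed

primrec mp :: "nat \<Rightarrow> 'a mat \<Rightarrow> 'a::comm_ring_1 list \<Rightarrow> 'a mat" where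
  "mp n C [] = 0\<^sub>m n n"
| "mp n C (a # as) = a \<cdot>\<^sub>m 1\<^sub>m n + C * mp n C as"

lemma mp_carrier[simp]: "C \<in> carrier_mat n n \<Longrightarrow> mp n C cs \<in> carrier_mat n n"
  by (induction cs) auto

lemma mp_comp_dims[simp]: "dim_row (mp n (comp_mat c n) cs) = n" "dim_col (mp n (comp_mat c n) cs) = n"
  by (metis carrier_matD mp_carrier comp_mat_carrier)+

lemma vp_add: "v \<in> carrier_vec n \<Longrightarrow> w \<in> carrier_vec n \<Longrightarrow> vp (v + w) = vp v + vp w"
  by (rule poly_eqI) (simp add: coeff_vp)

lemma vp_smult: "vp (a \<cdot>\<^sub>v v) = Polynomial.smult a (vp v)"
  by (rule poly_eqI) (simp add: coeff_vp)

lemma vp_mp: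
  assumes v: "v \<in> carrier_vec n" and n: "n \<ge> 1"
  shows "\<exists>q. vp (mp n (comp_mat c n) cs *\<^sub>v v) = Poly cs * vp v + Fc c n * q"
proof (induction cs)
  case Nil
  have "vp (0\<^sub>m n n *\<^sub>v v) = 0" using v by (intro poly_eqI) (simp add: coeff_vp)
  then show ?case by (intro exI[of _ 0]) simp
next
  case (Cons a as)
  let ?C = "comp_mat c n"
  let ?M = "mp n ?C as"
  from Cons obtain q where q: "vp (?M *\<^sub>v v) = Poly as * vp v + Fc c n * q" by blast
  have M: "?M \<in> carrier_mat n n" by simp
  have "mp n ?C (a # as) *\<^sub>v v = (a \<cdot>\<^sub>m 1\<^sub>m n) *\<^sub>v v + (?C * ?M) *\<^sub>v v"
    using M v by (simp, subst add_mult_distrib_mat_vec[of _ n n]) (auto intro: mult_carrier_mat[of _ n n])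
  also have "\<dots> = a \<cdot>\<^sub>v v + ?C *\<^sub>v (?M *\<^sub>v v)"
    using M v by (auto simp: assoc_mult_mat_vec[of _ n n _ n v] intro!: eq_vecI)
  finally have eq: "mp n ?C (a # as) *\<^sub>v v = a \<cdot>\<^sub>v v + ?C *\<^sub>v (?M *\<^sub>v v)" .
  have "vp (mp n ?C (a # as) *\<^sub>v v) = Polynomial.smult a (vp v) + vp (?C *\<^sub>v (?M *\<^sub>v v))"
    unfolding eq using M v by (subst vp_add[of _ n]) (auto simp: vp_smult intro!: mult_mat_vec_carrier[of _ n n])
  also have "\<dots> = Polynomial.smult a (vp v) + pCons 0 (vp (?M *\<^sub>v v)) - Polynomial.smult ((?M *\<^sub>v v)$(n-1)) (Fc c n)"
    using M v n by (subst vp_comp[of _ n]) (auto intro!: mult_mat_vec_carrier[of _ n n])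
  also have "\<dots> = Polynomial.smult a (vp v) + pCons 0 (Poly as * vp v) + pCons 0 (Fc c n * q) - Polynomial.smult ((?M *\<^sub>v v)$(n-1)) (Fc c n)"
    unfolding q by (simp add: add.assoc)
  also have "\<dots> = Poly (a # as) * vp v + Fc c n * (pCons 0 q - [:(?M *\<^sub>v v)$(n-1):])"
    by (simp add: algebra_simps)
  finally show ?case by blast
qed

lemma unit_mod_F:
  assumes n: "n \<ge> 1" and d: "det (mp n (comp_mat c n) cs) dvd 1"
  shows "\<exists>V Q. Poly cs * V = 1 + Fc c n * Q"
proof -
  let ?M = "mp n (comp_mat c n) cs"
  have M: "?M \<in> carrier_mat n n" by simp
  define w where "w = adj_mat ?M *\<^sub>v unit_vec n 0"
  have w: "w \<in> carrier_vec n" unfolding w_def using adj_mat(1)[OF M] by simp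
  have "?M *\<^sub>v w = (?M * adj_mat ?M) *\<^sub>v unit_vec n 0"
    unfolding w_def using M adj_mat(1)[OF M] by (simp add: assoc_mult_mat_vec[of _ n n _ n])
  also have "\<dots> = det ?M \<cdot>\<^sub>v unit_vec n 0"
    using adj_mat(2)[OF M] by (auto intro!: eq_vecI)
  finally have Mw: "?M *\<^sub>v w = det ?M \<cdot>\<^sub>v unit_vec n 0" .
  have "vp (det ?M \<cdot>\<^sub>v unit_vec n 0) = [:det ?M:]"
    using n by (intro poly_eqI) (auto simp: coeff_vp coeff_pCons split: nat.split)
  with Mw obtain q where q: "[:det ?M:] = Poly cs * vp w + Fc c n * q"
    using vp_mp[OF w n, of c cs] by auto
  from d obtain e where e: "1 = det ?M * e" by (auto elim: dvdE)
  have "Poly cs * Polynomial.smult e (vp w) = Polynomial.smult e (Poly cs * vp w)" by simp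
  also have "\<dots> = Polynomial.smult e ([:det ?M:] - Fc c n * q)" using q by simp
  also have "\<dots> = 1 + Fc c n * (- Polynomial.smult e q)"
    using e by (simp add: algebra_simps smult_diff_right)
  finally show ?thesis by blast
qed


lemma poly_vp: "poly (vp v) x = (\<Sum>j<dim_vec v. v$j * x^j)"
  unfolding vp_def by (simp add: poly_sum poly_monom)

lemma det_mp_idom:
  fixes c t :: "nat \<Rightarrow> 'a::idom"
  assumes n: "n \<ge> 1"
    and roots: "\<And>i. i < n \<Longrightarrow> t i ^ n + (\<Sum>j<n. c j * t i ^ j) = 0"
    and inj: "inj_on t {..<n}"
  shows "det (mp n (comp_mat c n) cs) = (\<Prod>i<n. poly (Poly cs) (t i))"
proof -
  let ?C = "comp_mat c n"
  define P where "P = mat n n (\<lambda>(i,j). t i ^ j)"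
  have P: "P \<in> carrier_mat n n" unfolding P_def by simp
  have rowC: "(\<Sum>k<n. t i ^ k * ?C $$ (k,l)) = t i ^ Suc l" if i: "i < n" and l: "l < n" for i l
  proof -
    have "(\<Sum>k<n. t i ^ k * ?C $$ (k,l)) = (\<Sum>k<n. (if k = Suc l then t i ^ k else 0)) - (if l = n - 1 then (\<Sum>k<n. c k * t i ^ k) else 0)"
    proof -
      have "(\<Sum>k<n. t i ^ k * ?C $$ (k,l)) = (\<Sum>k<n. (if k = Suc l then t i ^ k else 0) - (if l = n-1 then c k * t i ^ k else 0))"
        using l by (intro sum.cong) (auto simp: comp_mat_def algebra_simps)
      then show ?thesis by (cases "l = n-1") (simp_all add: sum_subtractf sum_negf)
    qed
    also have "\<dots> = t i ^ Suc l"
    proof (cases "l = n - 1")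
      case True
      then have "\<not> Suc l < n" using l by auto
      then show ?thesis using True roots[OF i] l n
        by (simp add: sum.delta') (metis Suc_pred' add.commute add_eq_0_iff_both_eq_0 neg_eq_iff_add_eq_0 not_one_le_zero zero_less_iff_neq_zero)
    next
      case False
      then show ?thesis using l by (simp add: sum.delta')
    qed
    finally show ?thesis .
  qed
  have rowM: "\<forall>i<n. \<forall>j<n. (\<Sum>k<n. t i ^ k * mp n ?C cs' $$ (k,j)) = poly (Poly cs') (t i) * t i ^ j" for cs'
  proof (induction cs')
    case Nil
    then show ?case by simp
  next
    case (Cons a as)
    show ?case
    proof (intro allI impI)
      fix i j assume i: "i < n" and j: "j < n"
      let ?M = "mp n ?C as"
      have M: "?M \<in> carrier_mat n n" by simp
      have ent: "mp n ?C (a # as) $$ (k,j) = (if k = j then a else 0) + (\<Sum>l<n. ?C $$ (k,l) * ?M $$ (l,j))"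
        if k: "k < n" for k
        using k j M by (simp add: scalar_prod_def lessThan_atLeast0)
      have "(\<Sum>k<n. t i ^ k * mp n ?C (a # as) $$ (k,j))
          = (\<Sum>k<n. (if k = j then a * t i ^ k else 0)) + (\<Sum>k<n. \<Sum>l<n. t i ^ k * ?C $$ (k,l) * ?M $$ (l,j))"
      proof -
        have "(\<Sum>k<n. t i ^ k * mp n ?C (a # as) $$ (k,j)) = (\<Sum>k<n. (if k = j then a * t i ^ k else 0) + (\<Sum>l<n. t i ^ k * ?C $$ (k,l) * ?M $$ (l,j)))"
          by (intro sum.cong refl, subst ent) (auto simp: distrib_left sum_distrib_left ac_simps)
        then show ?thesis by (simp add: sum.distrib)
      qed
      also have "(\<Sum>k<n. \<Sum>l<n. t i ^ k * ?C $$ (k,l) * ?M $$ (l,j)) = (\<Sum>l<n. (\<Sum>k<n. t i ^ k * ?C $$ (k,l)) * ?M $$ (l,j))"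
        by (subst sum.swap) (simp add: sum_distrib_right)
      also have "\<dots> = (\<Sum>l<n. t i * (t i ^ l * ?M $$ (l,j)))"
        using i by (intro sum.cong) (auto simp: rowC)
      also have "\<dots> = t i * (poly (Poly as) (t i) * t i ^ j)"
        using Cons i j by (simp add: sum_distrib_left[symmetric])
      finally show "(\<Sum>k<n. t i ^ k * mp n ?C (a # as) $$ (k,j)) = poly (Poly (a # as)) (t i) * t i ^ j"
        using j by (simp add: sum.delta' algebra_simps)
    qed
  qed
  define D where "D = mat n n (\<lambda>(i,j). if i = j then poly (Poly cs) (t i) else 0)"
  have D: "D \<in> carrier_mat n n" unfolding D_def by simp
  let ?M = "mp n ?C cs"
  have M: "?M \<in> carrier_mat n n" by simp
  have PMDP: "P * ?M = D * P"
  proof (rule eq_matI)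
    fix i j assume i: "i < dim_row (D * P)" and j: "j < dim_col (D * P)"
    then have i: "i < n" and j: "j < n" using D P by auto
    have "(P * ?M) $$ (i,j) = (\<Sum>k<n. t i ^ k * ?M $$ (k,j))"
      using i j M unfolding P_def by (simp add: scalar_prod_def lessThan_atLeast0)
    also have "\<dots> = poly (Poly cs) (t i) * t i ^ j" using rowM i j by blast
    also have "\<dots> = (D * P) $$ (i,j)"
    proof -
      have "(D * P) $$ (i,j) = (\<Sum>k\<in>{0..<n}. (if i = k then poly (Poly cs) (t i) else 0) * t k ^ j)"
        using i j unfolding D_def P_def by (simp add: scalar_prod_def)
      also have "\<dots> = (\<Sum>k\<in>{0..<n}. if i = k then poly (Poly cs) (t i) * t i ^ j else 0)"
        by (rule sum.cong) auto
      finally show ?thesis using i by simp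
    qed
    finally show "(P * ?M) $$ (i,j) = (D * P) $$ (i,j)" .
  qed (use D P M in auto)
  have detD: "det D = (\<Prod>i<n. poly (Poly cs) (t i))"
  proof -
    have "upper_triangular D" unfolding D_def upper_triangular_def by auto
    then have "det D = prod_list (diag_mat D)" using det_upper_triangular[OF _ D] by blast
    also have "\<dots> = (\<Prod>i<n. poly (Poly cs) (t i))"
      unfolding diag_mat_def D_def
      by (simp add: prod.distinct_set_conv_list[symmetric] lessThan_atLeast0)
    finally show ?thesis .
  qed
  have detP: "det P \<noteq> 0"
  proof
    assume "det P = 0"
    then obtain v where v: "v \<in> carrier_vec n" "v \<noteq> 0\<^sub>v n" "P *\<^sub>v v = 0\<^sub>v n"
      using det_0_iff_vec_prod_zero[OF P] by blast
    have dv: "dim_vec v = n" using v by auto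
    obtain j0 where j0: "j0 < n" "v $ j0 \<noteq> 0" using v by (metis dv eq_vecI index_zero_vec(1,2))
    have nz: "vp v \<noteq> 0"
    proof
      assume "vp v = 0"
      then have "coeff (vp v) j0 = 0" by simp
      then show False using j0 dv by (simp add: coeff_vp)
    qed
    have deg: "degree (vp v) \<le> n - 1"
      by (rule degree_le) (auto simp: coeff_vp dv)
    have "t ` {..<n} \<subseteq> {x. poly (vp v) x = 0}"
    proof
      fix x assume "x \<in> t ` {..<n}"
      then obtain i where i: "i < n" "x = t i" by auto
      have "(P *\<^sub>v v) $ i = (\<Sum>j<n. v$j * t i ^ j)"
        using i dv unfolding P_def by (simp add: scalar_prod_def lessThan_atLeast0 mult.commute)
      then show "x \<in> {x. poly (vp v) x = 0}" using v(3) i by (simp add: poly_vp dv)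
    qed
    then have "card (t ` {..<n}) \<le> card {x. poly (vp v) x = 0}"
      by (intro card_mono poly_roots_finite nz)
    also have "\<dots> \<le> degree (vp v)" by (rule card_poly_roots_bound[OF nz])
    finally have "n \<le> degree (vp v)" using card_image[OF inj] by simp
    with deg n show False by simp
  qed
  have "det P * det ?M = det P * det D"
    using det_mult[OF P M] det_mult[OF D P] PMDP by (metis mult.commute)
  then show ?thesis using detP detD by simp
qed

lemma mconst_0[simp]: "mconst 0 = 0" unfolding mconst_def by simp
lemma mconst_1[simp]: "mconst 1 = 1" unfolding mconst_def by simp
lemma mconst_mult: "mconst (a * b) = mconst a * mconst b" unfolding mconst_def by (simp add: mult_single)
lemma mconst_neg: "mconst (- a) = - mconst a" unfolding mconst_def by (simp add: single_uminus)
lemma mconst_pow: "mconst (a ^ k) = mconst a ^ k" by (induction k) (simp_all add: mconst_mult)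

lemma S0: "0 \<in> sym_subalg n" using sym_subalg.const[of 0 n] by simp
lemma S1: "1 \<in> sym_subalg n" using sym_subalg.const[of 1 n] by simp
lemma Sneg: "f \<in> sym_subalg n \<Longrightarrow> - f \<in> sym_subalg n"
  using sym_subalg.mult[OF sym_subalg.const[of "-1" n], of f] by (simp add: mconst_neg)
lemma Sdiff: "f \<in> sym_subalg n \<Longrightarrow> g \<in> sym_subalg n \<Longrightarrow> f - g \<in> sym_subalg n"
  unfolding diff_conv_add_uminus by (intro sym_subalg.add Sneg)
lemma Ssum: "(\<And>x. x \<in> A \<Longrightarrow> f x \<in> sym_subalg n) \<Longrightarrow> sum f A \<in> sym_subalg n"
  by (induction A rule: infinite_finite_induct) (auto intro: S0 sym_subalg.add)
lemma Sprod: "(\<And>x. x \<in> A \<Longrightarrow> f x \<in> sym_subalg n) \<Longrightarrow> prod f A \<in> sym_subalg n"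
  by (induction A rule: infinite_finite_induct) (auto intro: S1 sym_subalg.mult)
lemma Spow: "f \<in> sym_subalg n \<Longrightarrow> f ^ k \<in> sym_subalg n"
  by (induction k) (auto intro: S1 sym_subalg.mult)

lemma Ssignof: "signof p \<in> sym_subalg n"
proof -
  have "sign p = 1 \<or> sign p = -1" by (simp add: sign_def)
  then show ?thesis using S1 Sneg[OF S1] by auto
qed

lemma signof_cases: "signof p = 1 \<or> signof p = -1"
  by (simp add: sign_def)

locale pset =
  fixes phi :: "'k::field \<Rightarrow> 'b::comm_ring_1" and psi :: "'k mpoly \<Rightarrow> 'b" and n :: nat
  assumes hom: "ring_hom_on phi" and kh: "kalg_hom_sym n phi psi"
begin

lemma phi_1: "phi 1 = 1" using hom unfolding ring_hom_on_def by simp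
lemma phi_add: "phi (x + y) = phi x + phi y" using hom unfolding ring_hom_on_def by simp
lemma phi_mult: "phi (x * y) = phi x * phi y" using hom unfolding ring_hom_on_def by simp
lemma phi_0: "phi 0 = 0" using phi_add[of 0 0] by simp
lemma phi_neg: "phi (- x) = - phi x"
proof -
  have "phi x + phi (-x) = 0" using phi_add[of x "-x"] phi_0 by simp
  then show ?thesis by (metis add.inverse_unique)
qed
lemma phi_pow: "phi (x ^ k) = phi x ^ k" by (induction k) (simp_all add: phi_1 phi_mult)

lemma psi_const: "psi (mconst c) = phi c" using kh unfolding kalg_hom_sym_def by simp
lemma psi_add: "f \<in> sym_subalg n \<Longrightarrow> g \<in> sym_subalg n \<Longrightarrow> psi (f + g) = psi f + psi g"
  using kh unfolding kalg_hom_sym_def by simp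
lemma psi_mult: "f \<in> sym_subalg n \<Longrightarrow> g \<in> sym_subalg n \<Longrightarrow> psi (f * g) = psi f * psi g"
  using kh unfolding kalg_hom_sym_def by simp
lemma psi_0: "psi 0 = 0" using psi_const[of 0] by (simp add: phi_0)
lemma psi_1: "psi 1 = 1" using psi_const[of 1] by (simp add: phi_1)
lemma psi_m1: "psi (-1) = -1"
  using psi_const[of "-1"] by (simp add: mconst_neg phi_neg phi_1)
lemma psi_neg: "f \<in> sym_subalg n \<Longrightarrow> psi (- f) = - psi f"
  using psi_mult[OF Sneg[OF S1], of f] psi_m1 by simp
lemma psi_diff: "f \<in> sym_subalg n \<Longrightarrow> g \<in> sym_subalg n \<Longrightarrow> psi (f - g) = psi f - psi g"
  unfolding diff_conv_add_uminus by (simp add: psi_add Sneg psi_neg del: add_uminus_conv_diff)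
lemma psi_sum: "(\<And>x. x \<in> A \<Longrightarrow> f x \<in> sym_subalg n) \<Longrightarrow> psi (sum f A) = (\<Sum>x\<in>A. psi (f x))"
  by (induction A rule: infinite_finite_induct) (auto simp: psi_0 psi_add Ssum)
lemma psi_prod: "(\<And>x. x \<in> A \<Longrightarrow> f x \<in> sym_subalg n) \<Longrightarrow> psi (prod f A) = (\<Prod>x\<in>A. psi (f x))"
  by (induction A rule: infinite_finite_induct) (auto simp: psi_1 psi_mult Sprod)
lemma psi_signof: "psi (signof p) = signof p"
proof -
  have "sign p = 1 \<or> sign p = -1" by (simp add: sign_def)
  then show ?thesis using psi_1 psi_m1 by auto
qed

lemma det_map:
  assumes X: "X \<in> carrier_mat m m" and S: "\<And>i j. i < m \<Longrightarrow> j < m \<Longrightarrow> X $$ (i,j) \<in> sym_subalg n"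
  shows "det (map_mat psi X) = psi (det X)"
proof -
  have X': "map_mat psi X \<in> carrier_mat m m" using X by simp
  have inS: "signof p * (\<Prod>i = 0..<m. X $$ (i, p i)) \<in> sym_subalg n" if p: "p permutes {0..<m}" for p
  proof -
    have "signof p \<in> sym_subalg n" by (rule Ssignof)
    moreover have "(\<Prod>i = 0..<m. X $$ (i, p i)) \<in> sym_subalg n"
      using p by (intro Sprod S) (auto simp: permutes_in_image)
    ultimately show ?thesis by (rule sym_subalg.mult)
  qed
  have "psi (det X) = (\<Sum>p\<in>{p. p permutes {0..<m}}. psi (signof p * (\<Prod>i = 0..<m. X $$ (i, p i))))"
    unfolding det_def'[OF X] using inS by (intro psi_sum) auto
  also have "\<dots> = (\<Sum>p\<in>{p. p permutes {0..<m}}. signof p * (\<Prod>i = 0..<m. psi (X $$ (i, p i))))"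
  proof (rule sum.cong[OF refl])
    fix p assume p: "p \<in> {p. p permutes {0..<m}}"
    have pr: "(\<Prod>i = 0..<m. X $$ (i, p i)) \<in> sym_subalg n"
      using p by (intro Sprod S) (auto simp: permutes_in_image)
    have sg: "signof p \<in> sym_subalg n" by (rule Ssignof)
    show "psi (signof p * (\<Prod>i = 0..<m. X $$ (i, p i))) = signof p * (\<Prod>i = 0..<m. psi (X $$ (i, p i)))"
      using p by (simp add: psi_mult[OF sg pr] psi_signof, subst psi_prod) (auto intro: S simp: permutes_in_image)
  qed
  also have "\<dots> = det (map_mat psi X)"
    unfolding det_def'[OF X'] using X
    by (intro sum.cong refl arg_cong2[where f="(*)"] prod.cong) (auto simp: permutes_in_image)
  finally show ?thesis by simp
qed

lemma mult_map:
  assumes X: "X \<in> carrier_mat m m" and Y: "Y \<in> carrier_mat m m"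
    and SX: "\<And>i j. i < m \<Longrightarrow> j < m \<Longrightarrow> X $$ (i,j) \<in> sym_subalg n"
    and SY: "\<And>i j. i < m \<Longrightarrow> j < m \<Longrightarrow> Y $$ (i,j) \<in> sym_subalg n"
  shows "\<And>i j. i < m \<Longrightarrow> j < m \<Longrightarrow> (X * Y) $$ (i,j) \<in> sym_subalg n"
    and "map_mat psi (X * Y) = map_mat psi X * map_mat psi Y"
proof -
  have ent: "(X * Y) $$ (i,j) = (\<Sum>k\<in>{0..<m}. X $$ (i,k) * Y $$ (k,j))" if "i < m" "j < m" for i j
    using X Y that by (simp add: scalar_prod_def)
  show S: "(X * Y) $$ (i,j) \<in> sym_subalg n" if "i < m" "j < m" for i j
    using that by (simp add: ent, intro Ssum sym_subalg.mult SX SY) auto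
  show "map_mat psi (X * Y) = map_mat psi X * map_mat psi Y"
  proof (rule eq_matI)
    fix i j assume "i < dim_row (map_mat psi X * map_mat psi Y)" "j < dim_col (map_mat psi X * map_mat psi Y)"
    then have ij: "i < m" "j < m" using X Y by auto
    have "map_mat psi (X * Y) $$ (i,j) = psi (\<Sum>k\<in>{0..<m}. X $$ (i,k) * Y $$ (k,j))"
      using ij X Y by (simp add: scalar_prod_def)
    also have "\<dots> = (\<Sum>k\<in>{0..<m}. psi (X $$ (i,k)) * psi (Y $$ (k,j)))"
      using ij by (subst psi_sum) (auto intro!: sum.cong sym_subalg.mult SX SY psi_mult)
    also have "\<dots> = (map_mat psi X * map_mat psi Y) $$ (i,j)"
      using ij X Y by (simp add: scalar_prod_def)
    finally show "map_mat psi (X * Y) $$ (i,j) = (map_mat psi X * map_mat psi Y) $$ (i,j)" .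
  qed (use X Y in auto)
qed

end

lemma esym_0: "esym n 0 = 1"
proof -
  have "{S. S \<subseteq> {0..<n} \<and> card S = 0} = {{}}"
    by (auto dest: finite_subset)
  then show ?thesis unfolding esym_def by simp
qed

lemma sum_rev: "(\<Sum>k\<in>{1..(n::nat)}. f k) = (\<Sum>j<n. f (n - j))"
  by (rule sum.reindex_bij_witness[where i="\<lambda>j. n - j" and j="\<lambda>k. n - k"]) auto

definition cM :: "nat \<Rightarrow> nat \<Rightarrow> 'k::field mpoly" where
  "cM n j = (-1)^(n-j) * esym n (n-j)"

lemma roots_cM:
  assumes i: "i < n"
  shows "(mvar i :: 'k::field mpoly) ^ n + (\<Sum>j<n. cM n j * mvar i ^ j) = 0"
proof -
  let ?x = "mvar i :: 'k mpoly"
  let ?U = "{0..<n}"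
  have "(\<Prod>j\<in>?U. ?x + (- mvar j)) = 0"
    using i by (intro prod_zero) auto
  also have "(\<Prod>j\<in>?U. ?x + (- mvar j)) = (\<Sum>T\<in>Pow ?U. (\<Prod>j\<in>T. - mvar j) * (\<Prod>j\<in>?U - T. ?x))"
    by (subst add.commute) (rule prod_add, simp)
  also have "\<dots> = (\<Sum>T\<in>Pow ?U. (-1) ^ card T * ?x ^ (n - card T) * (\<Prod>j\<in>T. mvar j))"
  proof (rule sum.cong[OF refl])
    fix T assume T: "T \<in> Pow ?U"
    then have "finite T" by (auto dest: finite_subset)
    then have "card (?U - T) = n - card T" using T by (subst card_Diff_subset) auto
    then show "(\<Prod>j\<in>T. - mvar j) * (\<Prod>j\<in>?U - T. ?x) = (-1) ^ card T * ?x ^ (n - card T) * (\<Prod>j\<in>T. mvar j)"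
      by (simp add: prod_uminus)
  qed
  also have "\<dots> = (\<Sum>k\<in>{0..n}. \<Sum>T\<in>{T. T \<in> Pow ?U \<and> card T = k}. (-1) ^ card T * ?x ^ (n - card T) * (\<Prod>j\<in>T. mvar j))"
    by (rule sum.group[symmetric]) (auto simp: card_mono[of ?U, simplified])
  also have "\<dots> = (\<Sum>k\<in>{0..n}. (-1) ^ k * ?x ^ (n - k) * esym n k)"
  proof (rule sum.cong[OF refl])
    fix k
    have "{T. T \<in> Pow ?U \<and> card T = k} = {S. S \<subseteq> ?U \<and> card S = k}" by auto
    then show "(\<Sum>T\<in>{T. T \<in> Pow ?U \<and> card T = k}. (-1) ^ card T * ?x ^ (n - card T) * (\<Prod>j\<in>T. mvar j))
        = (-1) ^ k * ?x ^ (n - k) * esym n k"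
      unfolding esym_def by (simp add: sum_distrib_left)
  qed
  also have "\<dots> = ?x ^ n + (\<Sum>k\<in>{1..n}. (-1) ^ k * ?x ^ (n - k) * esym n k)"
    by (subst sum.atLeast_Suc_atMost) (simp_all add: esym_0)
  also have "(\<Sum>k\<in>{1..n}. (-1) ^ k * ?x ^ (n - k) * esym n k) = (\<Sum>j<n. cM n j * ?x ^ j)"
    unfolding sum_rev cM_def by (intro sum.cong refl) (simp add: ac_simps)
  finally show ?thesis by simp
qed

lemma mvar_inj: "inj_on (mvar :: nat \<Rightarrow> 'k::field mpoly) A"
proof (rule inj_onI)
  fix i j assume "(mvar i :: 'k mpoly) = mvar j"
  then have "Poly_Mapping.keys (mvar i :: 'k mpoly) = Poly_Mapping.keys (mvar j :: 'k mpoly)" by simp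
  then have "Poly_Mapping.single i (1::nat) = Poly_Mapping.single j 1"
    unfolding mvar_def by (simp add: Poly_Mapping.keys_single)
  then have "Poly_Mapping.keys (Poly_Mapping.single i (1::nat)) = Poly_Mapping.keys (Poly_Mapping.single j (1::nat))" by simp
  then show "i = j" by (simp add: Poly_Mapping.keys_single)
qed

lemma det_univ:
  assumes n: "n \<ge> 1"
  shows "det (mp n (comp_mat (cM n) n) (map mconst cs)) = (\<Prod>i<n. poly (Poly (map mconst cs)) (mvar i :: 'k::field mpoly))"
  by (rule det_mp_idom[OF n roots_cM mvar_inj])

context pset begin

lemma cM_S: "j < n \<Longrightarrow> cM n j \<in> sym_subalg n"
  unfolding cM_def by (intro sym_subalg.mult Spow Sneg S1 sym_subalg.gen) auto

lemma if_S: "(if P then x else y) \<in> sym_subalg n" if "x \<in> sym_subalg n" "y \<in> sym_subalg n"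
  using that by simp

lemma CM_S: "comp_mat (cM n) n $$ (i,j) \<in> sym_subalg n" if "i < n" "j < n"
  unfolding comp_mat_def using that by (auto intro!: Sdiff Sneg S0 S1 cM_S)

lemma psi_m1pow: "psi ((-1) ^ k) = (-1) ^ k"
proof (induction k)
  case 0 then show ?case by (simp add: psi_1)
next
  case (Suc k)
  have "psi ((-1) ^ Suc k) = psi (-1 * (-1) ^ k)" by (simp only: power_Suc)
  also have "\<dots> = psi (-1) * psi ((-1) ^ k)"
    by (rule psi_mult[OF Sneg[OF S1] Spow[OF Sneg[OF S1]]])
  finally have "psi ((-1) ^ Suc k) = psi (-1) * psi ((-1) ^ k)" .
  then show ?case using Suc psi_m1 by simp
qed

lemma CM_map: "map_mat psi (comp_mat (cM n) n) = comp_mat (\<lambda>j. psi (cM n j)) n"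
proof (rule eq_matI)
  fix i j assume "i < dim_row (comp_mat (\<lambda>j. psi (cM n j)) n)" "j < dim_col (comp_mat (\<lambda>j. psi (cM n j)) n)"
  then have ij: "i < n" "j < n" by auto
  show "map_mat psi (comp_mat (cM n) n) $$ (i, j) = comp_mat (\<lambda>j. psi (cM n j)) n $$ (i, j)"
    using ij cM_S[OF ij(1)] psi_neg[OF cM_S[OF ij(1)]]
    by (cases "i = Suc j"; cases "j = n - 1") (simp_all add: comp_mat_def psi_diff psi_0 psi_1 psi_neg S0 S1)
qed auto

lemma mp_map:
  "(\<forall>i<n. \<forall>j<n. mp n (comp_mat (cM n) n) (map mconst cs) $$ (i,j) \<in> sym_subalg n) \<and>
   map_mat psi (mp n (comp_mat (cM n) n) (map mconst cs)) = mp n (comp_mat (\<lambda>j. psi (cM n j)) n) (map phi cs)"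
proof (induction cs)
  case Nil
  show ?case by (auto simp: S0 psi_0 intro!: eq_matI)
next
  case (Cons a as)
  let ?C = "comp_mat (cM n) n"
  let ?M = "mp n ?C (map mconst as)"
  let ?CA = "comp_mat (\<lambda>j. psi (cM n j)) n"
  have C: "?C \<in> carrier_mat n n" and M: "?M \<in> carrier_mat n n" by simp_all
  from Cons have SM: "\<And>i j. i < n \<Longrightarrow> j < n \<Longrightarrow> ?M $$ (i,j) \<in> sym_subalg n"
    and mapM: "map_mat psi ?M = mp n ?CA (map phi as)" by auto
  have SCM: "\<And>i j. i < n \<Longrightarrow> j < n \<Longrightarrow> (?C * ?M) $$ (i,j) \<in> sym_subalg n"
  proof -
    fix i j assume ij: "i < n" "j < n"
    have "(?C * ?M) $$ (i,j) = (\<Sum>k\<in>{0..<n}. ?C $$ (i,k) * ?M $$ (k,j))"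
      using ij C M by (simp add: scalar_prod_def)
    then show "(?C * ?M) $$ (i,j) \<in> sym_subalg n"
      using ij by (simp only:, intro Ssum sym_subalg.mult CM_S SM) auto
  qed
  have mapCM: "map_mat psi (?C * ?M) = ?CA * mp n ?CA (map phi as)"
    using mult_map(2)[OF C M CM_S SM] CM_map mapM by simp
  have ent: "mp n ?C (map mconst (a # as)) $$ (i,j) = mconst a * (if i = j then 1 else 0) + (?C * ?M) $$ (i,j)"
    if "i < n" "j < n" for i j
    using that C M by simp
  have entS: "mp n ?C (map mconst (a # as)) $$ (i,j) \<in> sym_subalg n" if ij: "i < n" "j < n" for i j
    unfolding ent[OF ij] by (rule sym_subalg.add[OF sym_subalg.mult[OF sym_subalg.const if_S[OF S1 S0]] SCM[OF ij]])
  have "map_mat psi (mp n ?C (map mconst (a # as))) = mp n ?CA (map phi (a # as))"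
  proof (rule eq_matI)
    fix i j assume "i < dim_row (mp n ?CA (map phi (a # as)))" "j < dim_col (mp n ?CA (map phi (a # as)))"
    then have ij: "i < n" "j < n" by auto
    have "map_mat psi (mp n ?C (map mconst (a # as))) $$ (i,j) = psi (mconst a * (if i = j then 1 else 0) + (?C * ?M) $$ (i,j))"
      using ij by (simp add: ent[OF ij, symmetric])
    also have "\<dots> = phi a * (if i = j then 1 else 0) + psi ((?C * ?M) $$ (i,j))"
    proof -
      have s1: "mconst a * (if i = j then 1 else 0) \<in> sym_subalg n"
        by (rule sym_subalg.mult[OF sym_subalg.const if_S[OF S1 S0]])
      have "psi (if i = j then 1 else 0) = (if i = j then 1 else 0)" by (simp add: psi_0 psi_1)
      then show ?thesis
        unfolding psi_add[OF s1 SCM[OF ij]] psi_mult[OF sym_subalg.const if_S[OF S1 S0]] psi_const by simp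
    qed
    also have "psi ((?C * ?M) $$ (i,j)) = (?CA * mp n ?CA (map phi as)) $$ (i,j)"
      using arg_cong[OF mapCM, of "\<lambda>X. X $$ (i,j)"] ij C M by simp
    also have "phi a * (if i = j then 1 else 0) + (?CA * mp n ?CA (map phi as)) $$ (i,j) = mp n ?CA (map phi (a # as)) $$ (i,j)"
      using ij by simp
    finally show "map_mat psi (mp n ?C (map mconst (a # as))) $$ (i,j) = mp n ?CA (map phi (a # as)) $$ (i,j)" .
  qed auto
  then show ?case using entS by blast
qed

lemma det_transfer:
  "det (mp n (comp_mat (\<lambda>j. psi (cM n j)) n) (map phi cs)) = psi (det (mp n (comp_mat (cM n) n) (map mconst cs)))"
proof -
  have "det (map_mat psi (mp n (comp_mat (cM n) n) (map mconst cs))) = psi (det (mp n (comp_mat (cM n) n) (map mconst cs)))"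
    using mp_map[of cs] by (intro det_map[of _ n]) auto
  then show ?thesis using mp_map[of cs] by simp
qed

lemma Fpsi_eq: "Fpsi n psi = Fc (\<lambda>j. psi (cM n j)) n"
proof -
  have "(\<Sum>i = 1..n. monom ((-1)^i * psi (esym n i)) (n - i)) = (\<Sum>j<n. monom (psi (cM n j)) j)"
    unfolding sum_rev
  proof (rule sum.cong[OF refl])
    fix j assume j: "j \<in> {..<n}"
    have "psi (cM n j) = psi ((-1)^(n-j)) * psi (esym n (n-j))"
      unfolding cM_def using j by (intro psi_mult Spow Sneg S1 sym_subalg.gen) auto
    then show "monom ((-1)^(n-j) * psi (esym n (n-j))) (n - (n - j)) = monom (psi (cM n j)) j"
      using j by (simp add: psi_m1pow)
  qed
  then show ?thesis unfolding Fpsi_def Fc_def by simp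
qed

lemma unitS:
  assumes g: "g \<in> SA phi" and n: "n \<ge> 1" and U: "\<forall>u\<in>Uset n. psi u dvd 1"
  shows "\<exists>V Q. g * V = 1 + Fpsi n psi * Q"
proof -
  obtain g0 where g0: "g = map_poly phi g0" "poly g0 0 \<noteq> 0" using g unfolding SA_def by blast
  let ?cs = "coeffs g0"
  let ?u = "\<Prod>i<n. eval_at_var g0 i"
  have uU: "?u \<in> Uset n" unfolding Uset_def using g0(2) by blast
  have ev: "eval_at_var g0 i = poly (Poly (map mconst ?cs)) (mvar i)" for i
    unfolding eval_at_var_def map_poly_def ..
  have "det (mp n (comp_mat (\<lambda>j. psi (cM n j)) n) (map phi ?cs)) = psi ?u"
    unfolding det_transfer det_univ[OF n] ev ..
  then have "det (mp n (comp_mat (\<lambda>j. psi (cM n j)) n) (map phi ?cs)) dvd 1" using U uU by simp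
  from unit_mod_F[OF n this] obtain V Q where "Poly (map phi ?cs) * V = 1 + Fc (\<lambda>j. psi (cM n j)) n * Q" by blast
  then show ?thesis unfolding Fpsi_eq g0(1) map_poly_def by blast
qed

end

lemma coeff_qsum: "coeff (\<Sum>i<n. monom (a i) i) k = (if k < n then a k else 0)"
  by (simp add: coeff_sum coeff_monom)

lemma poly_as_sum:
  assumes "\<And>k. k \<ge> n \<Longrightarrow> coeff m k = 0"
  shows "m = (\<Sum>i<n. monom (coeff m i) i)"
  by (rule poly_eqI) (use assms in \<open>auto simp: coeff_qsum not_less\<close>)

theorem proposition4p2:
  fixes phi :: "'k::field \<Rightarrow> 'b::comm_ring_1"
    and psi :: "'k mpoly \<Rightarrow> 'b"
    and n :: nat
  assumes "n \<ge> 1"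
    and "ring_hom_on phi"
    and "kalg_hom_sym n phi psi"
    and "\<forall>u\<in>Uset n. psi u dvd 1"
  shows "(\<forall>p. \<forall>g\<in>SA phi. \<exists>a :: nat \<Rightarrow> 'b.
            loc_quot_eq (SA phi) (Fpsi n psi) (p, g) (\<Sum>i<n. monom (a i) i, 1))
       \<and> (\<forall>a :: nat \<Rightarrow> 'b.
            loc_quot_eq (SA phi) (Fpsi n psi) (\<Sum>i<n. monom (a i) i, 1) (0, 1)
              \<longrightarrow> (\<forall>i<n. a i = 0))"
proof -
  interpret pset phi psi n using assms(2,3) by unfold_locales
  have n: "n \<ge> 1" and U: "\<forall>u\<in>Uset n. psi u dvd 1" using assms(1,4) by auto
  have oneSA: "1 \<in> SA phi"
  proof -
    have "map_poly phi 1 = 1" by (simp add: map_poly_def phi_1)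
    then show ?thesis unfolding SA_def by (intro CollectI exI[of _ 1]) simp
  qed
  let ?F = "Fpsi n psi"
  show ?thesis
  proof (cases "(1::'b) = 0")
    case True
    have all0: "x = 0" for x :: "'b poly"
    proof -
      have "(1::'b poly) = 0" using True by (metis pCons_0_0 one_pCons)
      then show ?thesis by (metis mult_1_right mult_zero_right)
    qed
    have allb: "x = 0" for x :: 'b using True by (metis mult_1_right mult_zero_right)
    show ?thesis
    proof (intro conjI allI ballI impI)
      fix p g :: "'b poly"
      have "loc_quot_eq (SA phi) ?F (p, g) (\<Sum>i<n. monom ((\<lambda>_. 0::'b) i) i, 1)"
        unfolding loc_quot_eq_def using oneSA by (auto intro!: exI[of _ 1] all0)
      then show "\<exists>a :: nat \<Rightarrow> 'b. loc_quot_eq (SA phi) ?F (p, g) (\<Sum>i<n. monom (a i) i, 1)" by (rule exI[of _ "\<lambda>_. 0"])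
    next
      fix a :: "nat \<Rightarrow> 'b" and i
      show "a i = 0" by (rule allb)
    qed
  next
    case False
    have cF: "coeff ?F k = (if k = n then 1 else 0) + (if k < n then psi (cM n k) else 0)" for k
      unfolding Fpsi_eq coeff_Fc ..
    have degF: "degree ?F = n"
    proof (rule antisym)
      show "degree ?F \<le> n" by (rule degree_le) (auto simp: cF)
      show "n \<le> degree ?F" by (rule le_degree) (use False in \<open>simp add: cF\<close>)
    qed
    have lcF: "lead_coeff ?F = 1" using degF by (simp add: cF)
    have Fnz: "?F \<noteq> 0" using lcF False by auto
    have part1: "\<exists>a :: nat \<Rightarrow> 'b. loc_quot_eq (SA phi) ?F (p, g) (\<Sum>i<n. monom (a i) i, 1)"
      if g: "g \<in> SA phi" for p g
    proof -
      obtain V Q where VQ: "g * V = 1 + ?F * Q" using unitS[OF g n U] by blast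
      obtain d m where dm: "pseudo_divmod (p * V) ?F = (d, m)" by (cases "pseudo_divmod (p * V) ?F") auto
      have pV: "p * V = ?F * d + m" using pseudo_divmod(1)[OF Fnz dm] lcF by simp
      have mdeg: "m = 0 \<or> degree m < n" using pseudo_divmod(2)[OF Fnz dm] degF by simp
      have mco: "coeff m k = 0" if "k \<ge> n" for k
        using mdeg that by (auto intro: coeff_eq_0)
      have msum: "m = (\<Sum>i<n. monom (coeff m i) i)" by (rule poly_as_sum) (rule mco)
      have meq: "m = p * V - ?F * d" using pV by simp
      have "p - m * g - ?F * (d * g - p * Q) = p - p * (g * V) + ?F * (p * Q)"
        unfolding meq by (simp add: algebra_simps)
      also have "\<dots> = 0" unfolding VQ by (simp add: algebra_simps)
      finally have z: "p - m * g - ?F * (d * g - p * Q) = 0" .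
      have "1 * ((p * 1 - m * g) * g - ?F * (d * g - p * Q) * g * 1) = g * (p - m * g - ?F * (d * g - p * Q))"
        by (simp add: algebra_simps)
      also have "\<dots> = 0" using z by simp
      finally have H: "1 * ((p * 1 - m * g) * g - ?F * (d * g - p * Q) * g * 1) = 0" .
      have "\<exists>r w s. w \<in> SA phi \<and> s \<in> SA phi \<and> s * ((p * 1 - m * g) * w - ?F * r * g * 1) = 0"
        using g oneSA H by blast
      then have "loc_quot_eq (SA phi) ?F (p, g) (m, 1)"
        unfolding loc_quot_eq_def by simp
      then show ?thesis using msum by (intro exI[of _ "coeff m"]) simp
    qed
    have part2: "\<forall>i<n. a i = 0"
      if L: "loc_quot_eq (SA phi) ?F (\<Sum>i<n. monom (a i) i, 1) (0, 1)" for a :: "nat \<Rightarrow> 'b"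
    proof -
      let ?q = "\<Sum>i<n. monom (a i) i"
      obtain r w s where w: "w \<in> SA phi" and s: "s \<in> SA phi"
        and eq: "s * ((?q * 1 - 0 * 1) * w - ?F * r * 1 * 1) = 0"
        using L unfolding loc_quot_eq_def by auto
      obtain Vs Qs where Vs: "s * Vs = 1 + ?F * Qs" using unitS[OF s n U] by blast
      obtain Vw Qw where Vw: "w * Vw = 1 + ?F * Qw" using unitS[OF w n U] by blast
      have eq2: "(s * Vs) * (w * Vw) * ?q = ?F * (r * s * Vs * Vw)"
      proof -
        have "s * ?q * w = s * ?F * r" using eq by (simp add: algebra_simps)
        then have "(s * ?q * w) * (Vs * Vw) = (s * ?F * r) * (Vs * Vw)" by simp
        then show ?thesis by (simp add: algebra_simps)
      qed
      define e where "e = r * s * Vs * Vw - ?q * (Qs + Qw + ?F * Qs * Qw)"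
      have qe: "?q = ?F * e"
      proof -
        have "(1 + ?F * Qs) * (1 + ?F * Qw) * ?q = ?F * (r * s * Vs * Vw)" using eq2 unfolding Vs Vw .
        then show ?thesis unfolding e_def by (simp add: algebra_simps)
      qed
      have "e = 0"
      proof (rule ccontr)
        assume enz: "e \<noteq> 0"
        have "coeff ?q (degree ?F + degree e) = coeff ?F (degree ?F) * coeff e (degree e)"
          unfolding qe by (rule coeff_mult_degree_sum)
        also have "\<dots> = lead_coeff e" using lcF by simp
        finally have "coeff ?q (n + degree e) \<noteq> 0" using enz degF by simp
        then show False by (simp add: coeff_qsum)
      qed
      then have "?q = 0" using qe by simp
      then show ?thesis using coeff_qsum[of a n] by (metis coeff_0)
    qed
    show ?thesis using part1 part2 by blast
  qed
qed

end
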